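(* Under the setup described in the context, for every $k\in\mathbb{Z}_+$, $$p_k:=\upsilon^\rho_\xi\big(I^k_0\text{ is bad}\big)\le L_k^{-\alpha}.$$
   Context: Let $\xi$ be an aperiodic positive integer-valued random variable with $\mathbb{E}(\xi^{1+\varepsilon})<\infty$ for some $\varepsilon>0$. Let $\rho$ be the stationary delay: $\mathbb{P}(\rho=k)=\frac{1}{\mathbb{E}(\xi)}\sum_{i\ge k+1}\mathbb{P}(\xi=i)$, $k\in\mathbb{Z}_+$, independent of i.i.d. copies $\xi_1,\xi_2,\dots$ of $\xi$. Under $\upsilon^\rho_\xi$, the environment is the random set $\Lambda=\{X_0,X_1,\dots\}\subseteq\mathbb{Z}_+$ where $X_0=\rho$, $X_i=X_{i-1}+\xi_i$. Let $c_1=c_1(\xi,\varepsilon)\in(0,\infty)$ be a constant such that, writing $Y_n=\mathbf 1_{\{n\in\Lambda\}}$, for all $n,m\in\mathbb{Z}_+$ and all events $A\in\sigma(Y_i;0\le i\le m)$, $B\in\sigma(Y_i;i\ge m+n)$ one has $\upsilon^\rho_\xi(A\cap B)\le\upsilon^\rho_\xi(A)\upsilon^\rho_\xi(B)+c_1n^{-\varepsilon}$ (such a constant exists). Fix $\alpha\in(0,\varepsilon/2]$ and $\gamma\in(1,1+\frac{\alpha}{\alpha+2})$, and let $L_0\in\mathbb{Z}_+$ satisfy: (i) $L_0^{\gamma-1}\ge3$; (ii) $L_0^{\varepsilon-\alpha}\ge\mathbb{E}(\rho^\varepsilon)$; (iii) $L_0^{c_2}\ge c_1+1$ where $c_2=2+2\alpha-\gamma\alpha-2\gamma>0$.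 Define $L_k=L_{k-1}\lfloor L_{k-1}^{\gamma-1}\rfloor$ for $k\ge1$. For $j,k\in\mathbb{Z}_+$ let the block $I^k_j=[jL_k,(j+1)L_k)\cap\mathbb{Z}_+$ and $l_{k,j}=\{j\lfloor L_{k-1}^{\gamma-1}\rfloor,\dots,(j+1)\lfloor L_{k-1}^{\gamma-1}\rfloor-1\}$ (so $I^k_j=\bigcup_{i\in l_{k,j}}I^{k-1}_i$). For an environment $\Lambda\subseteq\mathbb{Z}_+$: $I^0_j$ is bad if $\Lambda\cap I^0_j=\varnothing$; for $k\ge1$, $I^k_j$ is bad if there exist $i_1,i_2\in l_{k,j}$ with $|i_1-i_2|\ge2$ such that $I^{k-1}_{i_1}$ and $I^{k-1}_{i_2}$ are both bad. A block is good if it is not bad. *)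

theory Defs
  imports "HOL-Probability.Probability"
begin

text \<open>Random environment: \<rho> is the delay, f j = \<xi>_(j+1) are i.i.d. copies of \<xi>.
  X_i = \<rho> + \<xi>_1 + ... + \<xi>_i, and Y n = (n \<in> \<Lambda>).\<close>

definition env_indicator :: "nat \<times> (nat \<Rightarrow> nat) \<Rightarrow> nat \<Rightarrow> bool" where
  "env_indicator \<omega> n = (\<exists>i. fst \<omega> + (\<Sum>j<i. snd \<omega> j) = n)"

definition env_law :: "nat pmf \<Rightarrow> nat pmf \<Rightarrow> (nat \<Rightarrow> bool) measure" where
  "env_law xi rho =
     distr (pair_measure (measure_pmf rho) (PiM UNIV (\<lambda>_::nat. measure_pmf xi)))
           (PiM UNIV (\<lambda>_::nat. count_space UNIV)) env_indicator"

definition coord_sigma :: "nat set \<Rightarrow> (nat \<Rightarrow> bool) set set" where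
  "coord_sigma S = sigma_sets UNIV {{y. y i \<in> X} | i X. i \<in> S}"

definition mfac :: "real \<Rightarrow> nat \<Rightarrow> nat" where
  "mfac \<gamma> L = nat \<lfloor>real L powr (\<gamma> - 1)\<rfloor>"

fun scale :: "nat \<Rightarrow> real \<Rightarrow> nat \<Rightarrow> nat" where
  "scale L0 \<gamma> 0 = L0"
| "scale L0 \<gamma> (Suc k) = scale L0 \<gamma> k * mfac \<gamma> (scale L0 \<gamma> k)"

definition block :: "nat \<Rightarrow> real \<Rightarrow> nat \<Rightarrow> nat \<Rightarrow> nat set" where
  "block L0 \<gamma> k j = {j * scale L0 \<gamma> k ..< (j+1) * scale L0 \<gamma> k}"

text \<open>l_{k,j} for k \<ge> 1, written with k = Suc k'.\<close>
definition subidx :: "nat \<Rightarrow> real \<Rightarrow> nat \<Rightarrow> nat \<Rightarrow> nat set" where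
  "subidx L0 \<gamma> k' j = {j * mfac \<gamma> (scale L0 \<gamma> k') ..< (j+1) * mfac \<gamma> (scale L0 \<gamma> k')}"

fun bad :: "nat \<Rightarrow> real \<Rightarrow> nat set \<Rightarrow> nat \<Rightarrow> nat \<Rightarrow> bool" where
  "bad L0 \<gamma> \<Lambda> 0 j = (\<Lambda> \<inter> block L0 \<gamma> 0 j = {})"
| "bad L0 \<gamma> \<Lambda> (Suc k) j =
     (\<exists>i1\<in>subidx L0 \<gamma> k j. \<exists>i2\<in>subidx L0 \<gamma> k j.
        2 \<le> \<bar>int i1 - int i2\<bar> \<and> bad L0 \<gamma> \<Lambda> k i1 \<and> bad L0 \<gamma> \<Lambda> k i2)"

end

theory Submission
  imports Defs
begin


lemma bad_shift:
  "bad L0 \<gamma> \<Lambda> k (i + j) = bad L0 \<gamma> {n. n + j * scale L0 \<gamma> k \<in> \<Lambda>} k i"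
proof (induction k arbitrary: i j)
  case 0
  show ?case
  proof
    assume h: "bad L0 \<gamma> \<Lambda> 0 (i + j)"
    show "bad L0 \<gamma> {n. n + j * scale L0 \<gamma> 0 \<in> \<Lambda>} 0 i"
    proof (simp, rule equals0I)
      fix x assume "x \<in> {n. n + j * L0 \<in> \<Lambda>} \<inter> block L0 \<gamma> 0 i"
      then have "x + j * L0 \<in> \<Lambda> \<inter> block L0 \<gamma> 0 (i+j)"
        by (auto simp: block_def algebra_simps)
      then show False using h by auto
    qed
  next
    assume h: "bad L0 \<gamma> {n. n + j * scale L0 \<gamma> 0 \<in> \<Lambda>} 0 i"
    show "bad L0 \<gamma> \<Lambda> 0 (i + j)"
    proof (simp, rule equals0I)
      fix x assume x: "x \<in> \<Lambda> \<inter> block L0 \<gamma> 0 (i+j)"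
      then have "x - j * L0 \<in> {n. n + j * L0 \<in> \<Lambda>} \<inter> block L0 \<gamma> 0 i"
        by (auto simp: block_def algebra_simps)
      then show False using h by auto
    qed
  qed
next
  case (Suc k)
  define m where "m = mfac \<gamma> (scale L0 \<gamma> k)"
  have sc: "j * scale L0 \<gamma> (Suc k) = (j * m) * scale L0 \<gamma> k" by (simp add: m_def)
  have IH: "\<And>i'. bad L0 \<gamma> \<Lambda> k (i' + j*m) = bad L0 \<gamma> {n. n + j * scale L0 \<gamma> (Suc k) \<in> \<Lambda>} k i'"
    unfolding sc by (rule Suc.IH)
  have sub: "subidx L0 \<gamma> k (i+j) = (\<lambda>x. x + j*m) ` subidx L0 \<gamma> k i"
  proof -
    have "subidx L0 \<gamma> k (i+j) = {i*m + j*m ..< (i+1)*m + j*m}"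
      by (simp add: subidx_def m_def algebra_simps)
    also have "\<dots> = (\<lambda>x. x + j*m) ` {i*m ..< (i+1)*m}"
      by (simp add: image_add_atLeastLessThan')
    finally show ?thesis by (simp add: subidx_def m_def)
  qed
  let ?S = "subidx L0 \<gamma> k i" and ?L = "{n. n + j * scale L0 \<gamma> (Suc k) \<in> \<Lambda>}"
  show ?case
    unfolding bad.simps sub
  proof
    assume "\<exists>i1\<in>(\<lambda>x. x + j*m) ` ?S. \<exists>i2\<in>(\<lambda>x. x + j*m) ` ?S.
        2 \<le> \<bar>int i1 - int i2\<bar> \<and> bad L0 \<gamma> \<Lambda> k i1 \<and> bad L0 \<gamma> \<Lambda> k i2"
    then obtain a b where ab: "a \<in> ?S" "b \<in> ?S" "2 \<le> \<bar>int (a + j*m) - int (b + j*m)\<bar>"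
      "bad L0 \<gamma> \<Lambda> k (a + j*m)" "bad L0 \<gamma> \<Lambda> k (b + j*m)" by blast
    show "\<exists>i1\<in>?S. \<exists>i2\<in>?S. 2 \<le> \<bar>int i1 - int i2\<bar> \<and> bad L0 \<gamma> ?L k i1 \<and> bad L0 \<gamma> ?L k i2"
      using ab by (intro bexI[of _ a] bexI[of _ b]) (auto simp: IH)
  next
    assume "\<exists>i1\<in>?S. \<exists>i2\<in>?S. 2 \<le> \<bar>int i1 - int i2\<bar> \<and> bad L0 \<gamma> ?L k i1 \<and> bad L0 \<gamma> ?L k i2"
    then obtain a b where ab: "a \<in> ?S" "b \<in> ?S" "2 \<le> \<bar>int a - int b\<bar>"
      "bad L0 \<gamma> ?L k a" "bad L0 \<gamma> ?L k b" by blast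
    show "\<exists>i1\<in>(\<lambda>x. x + j*m) ` ?S. \<exists>i2\<in>(\<lambda>x. x + j*m) ` ?S.
        2 \<le> \<bar>int i1 - int i2\<bar> \<and> bad L0 \<gamma> \<Lambda> k i1 \<and> bad L0 \<gamma> \<Lambda> k i2"
      using ab by (intro bexI[of _ "a + j*m"] bexI[of _ "b + j*m"]) (auto simp: IH)
  qed
qed



lemma coord_sigma_sa: "sigma_algebra UNIV (coord_sigma S)"
  unfolding coord_sigma_def by (rule sigma_algebra_sigma_sets) auto

lemma coord_sigma_mono: "S \<subseteq> T \<Longrightarrow> coord_sigma S \<subseteq> coord_sigma T"
  unfolding coord_sigma_def by (rule sigma_sets_subseteq) blast

lemma coord_sigma_gen: "i \<in> S \<Longrightarrow> {y. y i \<in> X} \<in> coord_sigma S"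
  unfolding coord_sigma_def by (rule sigma_sets.Basic) blast

lemma coord_sigma_sets: "coord_sigma S \<subseteq> sets (PiM UNIV (\<lambda>_::nat. count_space (UNIV::bool set)))"
proof -
  have sp: "space (PiM UNIV (\<lambda>_::nat. count_space (UNIV::bool set))) = UNIV"
    by (simp add: space_PiM)
  have "{{y. y i \<in> X} | i X. i \<in> S} \<subseteq> sets (PiM UNIV (\<lambda>_::nat. count_space (UNIV::bool set)))"
  proof safe
    fix i X
    have "(\<lambda>y. y i) -` X \<inter> space (PiM UNIV (\<lambda>_::nat. count_space (UNIV::bool set))) \<in> sets (PiM UNIV (\<lambda>_::nat. count_space (UNIV::bool set)))"
      by (rule measurable_sets[OF measurable_component_singleton]) auto
    then show "{y. y i \<in> X} \<in> sets (PiM UNIV (\<lambda>_::nat. count_space (UNIV::bool set)))"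
      by (simp add: sp vimage_def)
  qed
  from sets.sigma_sets_subset[OF this] show ?thesis unfolding coord_sigma_def sp .
qed

lemma block_sub:
  assumes "i \<in> subidx L0 \<gamma> k j"
  shows "block L0 \<gamma> k i \<subseteq> block L0 \<gamma> (Suc k) j"
proof
  fix x assume x: "x \<in> block L0 \<gamma> k i"
  let ?L = "scale L0 \<gamma> k" and ?m = "mfac \<gamma> (scale L0 \<gamma> k)"
  from assms have i: "j * ?m \<le> i" "i + 1 \<le> (j+1) * ?m" by (auto simp: subidx_def)
  from x have "i * ?L \<le> x" "x < (i+1) * ?L" by (auto simp: block_def)
  moreover have "(j * ?m) * ?L \<le> i * ?L" using i by (intro mult_right_mono) auto
  moreover have "(i+1) * ?L \<le> ((j+1) * ?m) * ?L" using i by (intro mult_right_mono) auto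
  ultimately have "j * ?m * ?L \<le> x" "x < (j+1) * ?m * ?L" by linarith+
  then have "j * (?L * ?m) \<le> x" "x < (j+1) * (?L * ?m)" by (simp_all only: ac_simps)
  then show "x \<in> block L0 \<gamma> (Suc k) j"
    unfolding block_def scale.simps by simp
qed

lemma bad_sigma: "{y. bad L0 \<gamma> {n. y n} k j} \<in> coord_sigma (block L0 \<gamma> k j)"
proof (induction k arbitrary: j)
  case 0
  interpret sa: sigma_algebra UNIV "coord_sigma (block L0 \<gamma> 0 j)" by (rule coord_sigma_sa)
  have "{y. bad L0 \<gamma> {n. y n} 0 j} = UNIV - (\<Union>n\<in>block L0 \<gamma> 0 j. {y. y n \<in> {True}})"
    by auto
  also have "\<dots> \<in> coord_sigma (block L0 \<gamma> 0 j)"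
    by (intro sa.Diff sa.top sa.finite_UN coord_sigma_gen) (auto simp: block_def)
  finally show ?case .
next
  case (Suc k)
  interpret sa: sigma_algebra UNIV "coord_sigma (block L0 \<gamma> (Suc k) j)" by (rule coord_sigma_sa)
  let ?S = "subidx L0 \<gamma> k j"
  have "{y. bad L0 \<gamma> {n. y n} (Suc k) j} = (\<Union>i1\<in>?S. \<Union>i2\<in>?S.
      (if 2 \<le> \<bar>int i1 - int i2\<bar> then {y. bad L0 \<gamma> {n. y n} k i1} \<inter> {y. bad L0 \<gamma> {n. y n} k i2} else {}))"
    by (auto split: if_splits)
  also have "\<dots> \<in> coord_sigma (block L0 \<gamma> (Suc k) j)"
  proof (intro sa.finite_UN)
    fix i1 i2 assume i: "i1 \<in> ?S" "i2 \<in> ?S"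
    have "{y. bad L0 \<gamma> {n. y n} k i1} \<in> coord_sigma (block L0 \<gamma> (Suc k) j)"
      using Suc.IH coord_sigma_mono[OF block_sub[OF i(1)]] by blast
    moreover have "{y. bad L0 \<gamma> {n. y n} k i2} \<in> coord_sigma (block L0 \<gamma> (Suc k) j)"
      using Suc.IH coord_sigma_mono[OF block_sub[OF i(2)]] by blast
    ultimately show "(if 2 \<le> \<bar>int i1 - int i2\<bar> then {y. bad L0 \<gamma> {n. y n} k i1} \<inter> {y. bad L0 \<gamma> {n. y n} k i2} else {})
       \<in> coord_sigma (block L0 \<gamma> (Suc k) j)"
      by auto
  qed (auto simp: subidx_def)
  finally show ?case .
qed



lemma meas_add_nat:
  assumes f: "f \<in> M \<rightarrow>\<^sub>M count_space UNIV" and g: "g \<in> M \<rightarrow>\<^sub>M count_space UNIV"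
  shows "(\<lambda>x. f x + g x :: nat) \<in> M \<rightarrow>\<^sub>M count_space UNIV"
proof (rule measurable_compose_countable'[where f = "\<lambda>n x. n + g x" and g = f and I = UNIV])
  fix n :: nat
  show "(\<lambda>x. n + g x) \<in> M \<rightarrow>\<^sub>M count_space UNIV"
    using measurable_compose[OF g, of "\<lambda>m. n + m" "count_space UNIV"] by simp
qed (use f in auto)

abbreviation OM :: "nat pmf \<Rightarrow> nat pmf \<Rightarrow> (nat \<times> (nat \<Rightarrow> nat)) measure" where "OM rho xi \<equiv> pair_measure (measure_pmf rho) (PiM UNIV (\<lambda>_::nat. measure_pmf xi))"

lemma meas_coord: "(\<lambda>\<omega>. snd \<omega> j) \<in> OM rho xi \<rightarrow>\<^sub>M count_space UNIV"
proof -
  have "(\<lambda>f. f j) \<in> PiM UNIV (\<lambda>_::nat. measure_pmf xi) \<rightarrow>\<^sub>M measure_pmf xi"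
    by (rule measurable_component_singleton) simp
  then have "(\<lambda>f. f j) \<in> PiM UNIV (\<lambda>_::nat. measure_pmf xi) \<rightarrow>\<^sub>M count_space UNIV"
    by (subst measurable_cong_sets[OF refl, of _ "measure_pmf xi"]) auto
  then show ?thesis using measurable_compose[OF measurable_snd] by blast
qed

lemma meas_fst: "(\<lambda>\<omega>. fst \<omega>) \<in> OM rho xi \<rightarrow>\<^sub>M count_space UNIV"
proof -
  have "(\<lambda>x. x) \<in> measure_pmf rho \<rightarrow>\<^sub>M count_space UNIV"
    by (subst measurable_cong_sets[OF refl, of _ "measure_pmf rho"]) auto
  then show ?thesis using measurable_compose[OF measurable_fst] by blast
qed

lemma meas_partial: "(\<lambda>\<omega>. fst \<omega> + (\<Sum>j<i. snd \<omega> j)) \<in> OM rho xi \<rightarrow>\<^sub>M count_space UNIV"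
proof (induction i)
  case 0 then show ?case using meas_fst by simp
next
  case (Suc i)
  have "(\<lambda>\<omega>. (fst \<omega> + (\<Sum>j<i. snd \<omega> j)) + snd \<omega> i) \<in> OM rho xi \<rightarrow>\<^sub>M count_space UNIV"
    by (rule meas_add_nat[OF Suc meas_coord])
  then show ?case by (simp add: add.assoc)
qed

lemma env_meas: "env_indicator \<in> OM rho xi \<rightarrow>\<^sub>M PiM UNIV (\<lambda>_::nat. count_space UNIV)"
proof -
  have "(\<lambda>\<omega> n. env_indicator \<omega> n) \<in> OM rho xi \<rightarrow>\<^sub>M PiM UNIV (\<lambda>_::nat. count_space UNIV)"
  proof (rule measurable_PiM_single')
    fix n :: nat
    have "Measurable.pred (OM rho xi) (\<lambda>\<omega>. \<exists>i. fst \<omega> + (\<Sum>j<i. snd \<omega> j) = n)"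
      by (intro pred_intros_countable pred_count_space_const1 meas_partial)
    then show "(\<lambda>\<omega>. env_indicator \<omega> n) \<in> OM rho xi \<rightarrow>\<^sub>M count_space UNIV"
      by (simp add: env_indicator_def)
  qed auto
  then show ?thesis by simp
qed



abbreviation BS :: "(nat \<Rightarrow> bool) measure" where "BS \<equiv> PiM UNIV (\<lambda>_::nat. count_space (UNIV::bool set))"
abbreviation SX :: "nat pmf \<Rightarrow> (nat \<Rightarrow> nat) measure" where "SX xi \<equiv> PiM UNIV (\<lambda>_::nat. measure_pmf xi)"

lemma space_BS[simp]: "space BS = UNIV" by (simp add: space_PiM)
lemma space_SX[simp]: "space (SX xi) = UNIV" by (simp add: space_PiM)
lemma space_OM[simp]: "space (OM rho xi) = UNIV" by (simp add: space_pair_measure)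

lemma SX_prob: "prob_space (SX xi)"
  by (intro prob_space_PiM prob_space_measure_pmf)

lemma ennsplit: "(\<Sum>n. f n :: ennreal) = f 0 + (\<Sum>n. f (Suc n))"
  using sums_unique[OF sums_Suc[OF summable_sums[OF summableI[of "\<lambda>n. f (Suc n)"]]]]
  by (simp add: add.commute)

lemma decomp:
  assumes A: "A \<in> sets (OM rho xi)"
  shows "emeasure (OM rho xi) A = (\<Sum>r. ennreal (pmf rho r) * emeasure (SX xi) (Pair r -` A))"
proof -
  interpret P: prob_space "SX xi" by (rule SX_prob)
  have "emeasure (OM rho xi) A = (\<integral>\<^sup>+r. emeasure (SX xi) (Pair r -` A) \<partial>measure_pmf rho)"
    by (rule P.emeasure_pair_measure_alt[OF A])
  also have "\<dots> = (\<Sum>r. ennreal (pmf rho r) * emeasure (SX xi) (Pair r -` A))"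
    by (simp add: nn_integral_measure_pmf nn_integral_count_space_nat)
  finally show ?thesis .
qed

lemma Y_suc1: "env_indicator (Suc r, f) (Suc n) = env_indicator (r, f) n"
  by (simp add: env_indicator_def)

lemma Y_suc0:
  assumes "s \<ge> 1"
  shows "env_indicator (0, case_nat s \<omega>) (Suc n) = env_indicator (s - 1, \<omega>) n"
proof
  assume "env_indicator (0, case_nat s \<omega>) (Suc n)"
  then obtain i where i: "(\<Sum>j<i. case_nat s \<omega> j) = Suc n" by (auto simp: env_indicator_def)
  then obtain i' where "i = Suc i'" by (cases i) auto
  with i have "s + (\<Sum>j<i'. \<omega> j) = Suc n" by (simp del: sum.lessThan_Suc add: sum.lessThan_Suc_shift)
  then have "s - 1 + (\<Sum>j<i'. \<omega> j) = n" using assms by simp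
  then show "env_indicator (s - 1, \<omega>) n" by (auto simp: env_indicator_def)
next
  assume "env_indicator (s - 1, \<omega>) n"
  then obtain i where i: "s - 1 + (\<Sum>j<i. \<omega> j) = n" by (auto simp: env_indicator_def)
  then have "(\<Sum>j<Suc i. case_nat s \<omega> j) = Suc n" using assms by (simp del: sum.lessThan_Suc add: sum.lessThan_Suc_shift)
  then show "env_indicator (0, case_nat s \<omega>) (Suc n)" unfolding env_indicator_def by (intro exI[of _ "Suc i"]) simp
qed

lemma pmf_rho_rec:
  fixes xi rho :: "nat pmf"
  assumes xi_pos: "set_pmf xi \<subseteq> {1..}"
    and rho_def: "\<And>k. pmf rho k = measure_pmf.prob xi {k+1..} / measure_pmf.expectation xi real"
  shows "pmf rho (Suc r) + pmf rho 0 * pmf xi (Suc r) = pmf rho r"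
proof -
  let ?E = "measure_pmf.expectation xi real"
  have p1: "measure_pmf.prob xi {1..} = 1"
    using xi_pos by (simp add: measure_pmf.prob_eq_1 AE_measure_pmf_iff subset_eq)
  have split: "measure_pmf.prob xi {Suc r..} = pmf xi (Suc r) + measure_pmf.prob xi {Suc (Suc r)..}"
  proof -
    have "{Suc r..} = {Suc r} \<union> {Suc (Suc r)..}" by auto
    then have "measure_pmf.prob xi {Suc r..} = measure_pmf.prob xi {Suc r} + measure_pmf.prob xi {Suc (Suc r)..}"
    proof -
      have "measure_pmf.prob xi ({Suc r} \<union> {Suc (Suc r)..}) = measure_pmf.prob xi {Suc r} + measure_pmf.prob xi {Suc (Suc r)..}"
        by (rule measure_pmf.finite_measure_Union) auto
      then show ?thesis using \<open>{Suc r..} = {Suc r} \<union> {Suc (Suc r)..}\<close> by simp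
    qed
    then show ?thesis by (simp add: measure_pmf_single)
  qed
  show ?thesis
    using split p1 by (simp add: rho_def add_divide_distrib)
qed



lemma shift1_meas: "(\<lambda>y n. y (Suc n)) \<in> BS \<rightarrow>\<^sub>M BS"
  by (rule measurable_PiM_single') (auto intro: measurable_component_singleton)

lemma cn_meas: "(\<lambda>(s, \<omega>). case_nat s \<omega>) \<in> OM xi xi \<rightarrow>\<^sub>M SX xi"
proof -
  have "(\<lambda>x. case_nat (fst x) (snd x)) \<in> OM xi xi \<rightarrow>\<^sub>M SX xi"
    by (rule measurable_case_nat') auto
  then show ?thesis by (simp add: split_beta')
qed

lemma stat1:
  fixes xi rho :: "nat pmf"
  assumes xi_pos: "set_pmf xi \<subseteq> {1..}"
    and rho_def: "\<And>k. pmf rho k = measure_pmf.prob xi {k+1..} / measure_pmf.expectation xi real"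
    and Q: "Q \<in> sets BS"
  shows "emeasure (OM rho xi) {\<omega>. (\<lambda>n. env_indicator \<omega> (Suc n)) \<in> Q} = emeasure (OM rho xi) {\<omega>. env_indicator \<omega> \<in> Q}"
proof -
  interpret S: sequence_space "measure_pmf xi"
    by (simp add: sequence_space_def product_prob_space_def product_prob_space_axioms_def
        product_sigma_finite_def prob_space_measure_pmf prob_space_imp_sigma_finite)
  define F where "F r = emeasure (SX xi) {f. env_indicator (r, f) \<in> Q}" for r
  have Y: "env_indicator \<in> OM rho xi \<rightarrow>\<^sub>M BS" by (rule env_meas)
  have A1: "{\<omega>. (\<lambda>n. env_indicator \<omega> (Suc n)) \<in> Q} \<in> sets (OM rho xi)"
    using measurable_sets[OF measurable_comp[OF Y shift1_meas] Q] by (simp add: vimage_def o_def)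
  have A0: "{\<omega>. env_indicator \<omega> \<in> Q} \<in> sets (OM rho xi)"
    using measurable_sets[OF Y Q] by (simp add: vimage_def)
  have R: "emeasure (OM rho xi) {\<omega>. env_indicator \<omega> \<in> Q} = (\<Sum>r. ennreal (pmf rho r) * F r)"
    by (subst decomp[OF A0]) (simp add: F_def vimage_def)
  define G where "G r = emeasure (SX xi) (Pair r -` {\<omega>. (\<lambda>n. env_indicator \<omega> (Suc n)) \<in> Q})" for r
  have L: "emeasure (OM rho xi) {\<omega>. (\<lambda>n. env_indicator \<omega> (Suc n)) \<in> Q} = (\<Sum>r. ennreal (pmf rho r) * G r)"
    by (subst decomp[OF A1]) (simp add: G_def)
  have GS: "G (Suc r) = F r" for r
    unfolding G_def F_def by (simp add: vimage_def Y_suc1)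
  have G0: "G 0 = (\<Sum>r. ennreal (pmf xi (Suc r)) * F r)"
  proof -
    let ?B = "Pair 0 -` {\<omega>. (\<lambda>n. env_indicator \<omega> (Suc n)) \<in> Q}"
    have B: "?B \<in> sets (SX xi)" by (rule sets_Pair1[OF A1])
    have "G 0 = emeasure (distr (OM xi xi) (SX xi) (\<lambda>(s, \<omega>). case_nat s \<omega>)) ?B"
      unfolding G_def S.PiM_iter ..
    also have "\<dots> = emeasure (OM xi xi) ((\<lambda>(s, \<omega>). case_nat s \<omega>) -` ?B \<inter> space (OM xi xi))"
      by (rule emeasure_distr[OF cn_meas B])
    also have "\<dots> = (\<Sum>s. ennreal (pmf xi s) * emeasure (SX xi) (Pair s -` ((\<lambda>(s, \<omega>). case_nat s \<omega>) -` ?B \<inter> space (OM xi xi))))"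
      by (rule decomp) (rule measurable_sets[OF cn_meas B])
    also have "\<dots> = (\<Sum>s. ennreal (pmf xi s) * F (s - 1))"
    proof (rule suminf_cong)
      fix s
      show "ennreal (pmf xi s) * emeasure (SX xi) (Pair s -` ((\<lambda>(s, \<omega>). case_nat s \<omega>) -` ?B \<inter> space (OM xi xi)))
           = ennreal (pmf xi s) * F (s - 1)"
      proof (cases "s = 0")
        case True
        have "pmf xi 0 = 0" using xi_pos by (auto simp: pmf_eq_0_set_pmf)
        then show ?thesis using True by simp
      next
        case False
        then have "Pair s -` ((\<lambda>(s, \<omega>). case_nat s \<omega>) -` ?B \<inter> space (OM xi xi)) = {f. env_indicator (s - 1, f) \<in> Q}"
          by (simp add: vimage_def Y_suc0)
        then show ?thesis by (simp add: F_def)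
      qed
    qed
    also have "\<dots> = (\<Sum>r. ennreal (pmf xi (Suc r)) * F r)"
    proof -
      have "pmf xi 0 = 0" using xi_pos by (auto simp: pmf_eq_0_set_pmf)
      then show ?thesis by (subst ennsplit) simp
    qed
    finally show ?thesis .
  qed
  have "(\<Sum>r. ennreal (pmf rho r) * G r) = ennreal (pmf rho 0) * G 0 + (\<Sum>r. ennreal (pmf rho (Suc r)) * F r)"
    by (subst ennsplit) (simp add: GS)
  also have "\<dots> = (\<Sum>r. ennreal (pmf rho 0) * (ennreal (pmf xi (Suc r)) * F r)) + (\<Sum>r. ennreal (pmf rho (Suc r)) * F r)"
    by (simp add: G0)
  also have "\<dots> = (\<Sum>r. ennreal (pmf rho 0) * (ennreal (pmf xi (Suc r)) * F r) + ennreal (pmf rho (Suc r)) * F r)"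
    by (rule suminf_add) auto
  also have "\<dots> = (\<Sum>r. ennreal (pmf rho r) * F r)"
  proof (rule suminf_cong)
    fix r
    have "ennreal (pmf rho 0) * (ennreal (pmf xi (Suc r)) * F r) + ennreal (pmf rho (Suc r)) * F r
        = (ennreal (pmf rho (Suc r) + pmf rho 0 * pmf xi (Suc r))) * F r"
      by (simp add: ennreal_plus ennreal_mult algebra_simps)
    then show "ennreal (pmf rho 0) * (ennreal (pmf xi (Suc r)) * F r) + ennreal (pmf rho (Suc r)) * F r
        = ennreal (pmf rho r) * F r"
      by (simp add: pmf_rho_rec[OF xi_pos rho_def])
  qed
  finally show ?thesis using L R by simp
qed



lemma shiftj_meas: "(\<lambda>y n. y (n + j)) \<in> BS \<rightarrow>\<^sub>M BS"
  by (rule measurable_PiM_single') (auto intro: measurable_component_singleton)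

lemma statj:
  fixes xi rho :: "nat pmf"
  assumes xi_pos: "set_pmf xi \<subseteq> {1..}"
    and rho_def: "\<And>k. pmf rho k = measure_pmf.prob xi {k+1..} / measure_pmf.expectation xi real"
    and Q: "Q \<in> sets BS"
  shows "emeasure (OM rho xi) {\<omega>. (\<lambda>n. env_indicator \<omega> (n + j)) \<in> Q} = emeasure (OM rho xi) {\<omega>. env_indicator \<omega> \<in> Q}"
  using Q
proof (induction j arbitrary: Q)
  case 0 then show ?case by simp
next
  case (Suc j)
  define Q' where "Q' = {y. (\<lambda>n. y (n + j)) \<in> Q}"
  have Q': "Q' \<in> sets BS"
    using measurable_sets[OF shiftj_meas Suc.prems, of j] by (simp add: Q'_def vimage_def)
  have "{\<omega>. (\<lambda>n. env_indicator \<omega> (n + Suc j)) \<in> Q} = {\<omega>. (\<lambda>n. env_indicator \<omega> (Suc n)) \<in> Q'}"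
    by (simp add: Q'_def)
  then have "emeasure (OM rho xi) {\<omega>. (\<lambda>n. env_indicator \<omega> (n + Suc j)) \<in> Q} = emeasure (OM rho xi) {\<omega>. env_indicator \<omega> \<in> Q'}"
    using stat1[OF xi_pos rho_def Q'] by simp
  also have "\<dots> = emeasure (OM rho xi) {\<omega>. env_indicator \<omega> \<in> Q}"
    using Suc.IH[OF Suc.prems] by (simp add: Q'_def)
  finally show ?case .
qed

lemma bad_sets: "{y. bad L0 \<gamma> {n. y n} k j} \<in> sets BS"
  using bad_sigma coord_sigma_sets by blast

lemma bad_stat:
  fixes xi rho :: "nat pmf"
  assumes xi_pos: "set_pmf xi \<subseteq> {1..}"
    and rho_def: "\<And>k. pmf rho k = measure_pmf.prob xi {k+1..} / measure_pmf.expectation xi real"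
  shows "measure (env_law xi rho) {y. bad L0 \<gamma> {n. y n} k j} = measure (env_law xi rho) {y. bad L0 \<gamma> {n. y n} k 0}"
proof -
  have m: "measure (env_law xi rho) B = measure (OM rho xi) {\<omega>. env_indicator \<omega> \<in> B}" if "B \<in> sets BS" for B
    unfolding env_law_def using measure_distr[OF env_meas that] by (simp add: vimage_def)
  have "{\<omega>. env_indicator \<omega> \<in> {y. bad L0 \<gamma> {n. y n} k j}}
      = {\<omega>. (\<lambda>n. env_indicator \<omega> (n + j * scale L0 \<gamma> k)) \<in> {y. bad L0 \<gamma> {n. y n} k 0}}"
    using bad_shift[of L0 \<gamma> _ k 0 j] by simp
  then have e: "emeasure (OM rho xi) {\<omega>. env_indicator \<omega> \<in> {y. bad L0 \<gamma> {n. y n} k j}}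
     = emeasure (OM rho xi) {\<omega>. env_indicator \<omega> \<in> {y. bad L0 \<gamma> {n. y n} k 0}}"
    using statj[OF xi_pos rho_def bad_sets[of L0 \<gamma> k 0], where j = "j * scale L0 \<gamma> k"]
    by simp
  show ?thesis
    unfolding m[OF bad_sets] measure_def[of "OM rho xi"] e ..
qed



lemma rho_integrable:
  fixes xi rho :: "nat pmf" and \<epsilon> :: real
  assumes xi_pos: "set_pmf xi \<subseteq> {1..}"
    and eps_pos: "\<epsilon> > 0"
    and xi_moment: "integrable (measure_pmf xi) (\<lambda>n. real n powr (1 + \<epsilon>))"
    and rho_def: "\<And>k. pmf rho k = measure_pmf.prob xi {k+1..} / measure_pmf.expectation xi real"
  shows "integrable (measure_pmf rho) (\<lambda>k. real k powr \<epsilon>)"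
proof -
  define E where "E = measure_pmf.expectation xi real"
  have "E \<noteq> 0"
  proof
    assume "E = 0"
    then have "pmf rho k = 0" for k using rho_def by (simp add: E_def)
    moreover obtain k where "k \<in> set_pmf rho" using set_pmf_not_empty[of rho] by blast
    ultimately show False by (simp add: set_pmf_iff)
  qed
  moreover have "E \<ge> 0" unfolding E_def by (rule Bochner_Integration.integral_nonneg) auto
  ultimately have Epos: "E > 0" by simp
  define c where "c = 1 / E"
  have c: "c \<ge> 0" using Epos by (simp add: c_def)
  have pr: "ennreal (pmf rho k) = ennreal c * emeasure (measure_pmf xi) {Suc k..}" for k
  proof -
    have "pmf rho k = c * measure_pmf.prob xi {Suc k..}" using rho_def[of k] by (simp add: c_def E_def)
    then show ?thesis using c by (simp add: ennreal_mult measure_pmf.emeasure_eq_measure)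
  qed
  have "(\<integral>\<^sup>+k. ennreal (real k powr \<epsilon>) \<partial>measure_pmf rho)
      = (\<Sum>k. ennreal (pmf rho k) * ennreal (real k powr \<epsilon>))"
    by (simp add: nn_integral_measure_pmf nn_integral_count_space_nat)
  also have "\<dots> = (\<Sum>k. ennreal c * (\<integral>\<^sup>+j. ennreal (real k powr \<epsilon>) * indicator {Suc k..} j \<partial>measure_pmf xi))"
    by (rule suminf_cong) (simp add: pr nn_integral_cmult_indicator ac_simps)
  also have "\<dots> = ennreal c * (\<integral>\<^sup>+j. (\<Sum>k. ennreal (real k powr \<epsilon>) * indicator {Suc k..} j) \<partial>measure_pmf xi)"
    by (simp add: nn_integral_suminf)
  also have "\<dots> \<le> ennreal c * (\<integral>\<^sup>+j. ennreal (real j powr (1 + \<epsilon>)) \<partial>measure_pmf xi)"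
  proof (intro mult_left_mono nn_integral_mono)
    fix j :: nat
    have "(\<Sum>k. ennreal (real k powr \<epsilon>) * indicator {Suc k..} j) = (\<Sum>k\<in>{..<j}. ennreal (real k powr \<epsilon>) * indicator {Suc k..} j)"
      by (rule suminf_finite) (auto simp: indicator_def)
    also have "\<dots> \<le> of_nat (card {..<j}) * ennreal (real j powr \<epsilon>)"
    proof (rule sum_bounded_above)
      fix k assume "k \<in> {..<j}"
      then have "real k powr \<epsilon> \<le> real j powr \<epsilon>" using eps_pos by (intro powr_mono2) auto
      then show "ennreal (real k powr \<epsilon>) * indicator {Suc k..} j \<le> ennreal (real j powr \<epsilon>)"
        by (auto simp: indicator_def)
    qed
    also have "\<dots> = ennreal (real j powr (1 + \<epsilon>))"
    proof (cases "j = 0")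
      case True then show ?thesis by simp
    next
      case False
      then have "real j powr (1 + \<epsilon>) = real j * real j powr \<epsilon>" by (simp add: powr_add)
      then show ?thesis by (simp add: ennreal_mult ennreal_of_nat_eq_real_of_nat)
    qed
    finally show "(\<Sum>k. ennreal (real k powr \<epsilon>) * indicator {Suc k..} j) \<le> ennreal (real j powr (1 + \<epsilon>))" .
  qed auto
  also have "\<dots> < \<infinity>"
    using integrableD(2)[OF xi_moment] by (simp add: ennreal_mult_less_top less_top)
  finally show ?thesis
    by (intro integrableI_nonneg) auto
qed



lemma base:
  fixes xi rho :: "nat pmf" and \<epsilon> \<alpha> :: real
  assumes xi_pos: "set_pmf xi \<subseteq> {1..}"
    and eps_pos: "\<epsilon> > 0"
    and xi_moment: "integrable (measure_pmf xi) (\<lambda>n. real n powr (1 + \<epsilon>))"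
    and rho_def: "\<And>k. pmf rho k = measure_pmf.prob xi {k+1..} / measure_pmf.expectation xi real"
    and L0pos: "L0 > 0"
    and L0_ii: "real L0 powr (\<epsilon> - \<alpha>) \<ge> measure_pmf.expectation rho (\<lambda>k. real k powr \<epsilon>)"
  shows "measure (env_law xi rho) {y. bad L0 \<gamma> {n. y n} 0 0} \<le> real L0 powr (-\<alpha>)"
proof -
  interpret P: prob_space "SX xi" by (rule SX_prob)
  have m: "measure (env_law xi rho) B = measure (OM rho xi) {\<omega>. env_indicator \<omega> \<in> B}" if "B \<in> sets BS" for B
    unfolding env_law_def using measure_distr[OF env_meas that] by (simp add: vimage_def)
  have pt: "bad L0 \<gamma> {n. env_indicator (r, f) n} 0 0 \<longleftrightarrow> L0 \<le> r" for r f
  proof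
    assume "bad L0 \<gamma> {n. env_indicator (r, f) n} 0 0"
    then have h: "{n. env_indicator (r, f) n} \<inter> {0..<L0} = {}" by (simp add: block_def)
    have "env_indicator (r, f) r" unfolding env_indicator_def by (intro exI[of _ 0]) simp
    with h show "L0 \<le> r" by (metis (mono_tags) Int_iff atLeastLessThan_iff empty_iff mem_Collect_eq not_le zero_le)
  next
    assume r: "L0 \<le> r"
    have "n \<ge> r" if "env_indicator (r, f) n" for n using that by (auto simp: env_indicator_def)
    with r show "bad L0 \<gamma> {n. env_indicator (r, f) n} 0 0" by (fastforce simp: block_def)
  qed
  have seteq: "{\<omega>. env_indicator \<omega> \<in> {y. bad L0 \<gamma> {n. y n} 0 0}} = {L0..} \<times> UNIV"
    using pt by auto
  have "emeasure (OM rho xi) ({L0..} \<times> UNIV) = emeasure (measure_pmf rho) {L0..} * emeasure (SX xi) UNIV"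
    using sets.top[of "SX xi"] by (intro P.emeasure_pair_measure_Times) auto
  also have "\<dots> = emeasure (measure_pmf rho) {L0..}"
    using P.emeasure_space_1 by simp
  finally have "measure (OM rho xi) ({L0..} \<times> UNIV) = measure_pmf.prob rho {L0..}"
    by (simp add: measure_def)
  then have eq: "measure (env_law xi rho) {y. bad L0 \<gamma> {n. y n} 0 0} = measure_pmf.prob rho {L0..}"
    using m[OF bad_sets[of L0 \<gamma> 0 0]] unfolding seteq by simp
  have pw: "L0 \<le> x \<longleftrightarrow> real L0 powr \<epsilon> \<le> real x powr \<epsilon>" for x
  proof
    assume "L0 \<le> x"
    then show "real L0 powr \<epsilon> \<le> real x powr \<epsilon>" using eps_pos by (intro powr_mono2) auto
  next
    assume "real L0 powr \<epsilon> \<le> real x powr \<epsilon>"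
    moreover have "x < L0 \<Longrightarrow> real x powr \<epsilon> < real L0 powr \<epsilon>" using eps_pos by (intro powr_less_mono2) auto
    ultimately show "L0 \<le> x" by force
  qed
  have "{L0..} = {x \<in> space (measure_pmf rho). real L0 powr \<epsilon> \<le> real x powr \<epsilon>}"
    using pw by auto
  then have "measure_pmf.prob rho {L0..} \<le> measure_pmf.expectation rho (\<lambda>k. real k powr \<epsilon>) / real L0 powr \<epsilon>"
    using integral_Markov_inequality_measure[OF rho_integrable[OF xi_pos eps_pos xi_moment rho_def], of UNIV "real L0 powr \<epsilon>"]
      L0pos by simp
  also have "\<dots> \<le> real L0 powr (\<epsilon> - \<alpha>) / real L0 powr \<epsilon>"
    using L0_ii L0pos by (intro divide_right_mono) auto
  also have "\<dots> = real L0 powr (-\<alpha>)"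
    using L0pos by (simp add: powr_diff powr_minus_divide)
  finally show ?thesis using eq by simp
qed



lemma arith_step:
  fixes x mm c1 \<alpha> \<epsilon> \<gamma> :: real and L0 :: real
  assumes x: "x \<ge> L0" "L0 \<ge> 1" and mm: "1 \<le> mm" "mm \<le> x powr (\<gamma> - 1)"
    and c1: "c1 > 0" and al: "0 < \<alpha>" "\<alpha> \<le> \<epsilon> / 2"
    and c2: "2 + 2*\<alpha> - \<gamma>*\<alpha> - 2*\<gamma> > 0"
    and L0c: "L0 powr (2 + 2*\<alpha> - \<gamma>*\<alpha> - 2*\<gamma>) \<ge> c1 + 1"
  shows "mm^2 * (x powr (-2*\<alpha>) + c1 * x powr (-\<epsilon>)) \<le> (x * mm) powr (-\<alpha>)"
proof -
  let ?c2 = "2 + 2*\<alpha> - \<gamma>*\<alpha> - 2*\<gamma>"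
  have x1: "x \<ge> 1" using x by simp
  have xp: "x > 0" using x1 by simp
  have "x powr (-\<epsilon>) \<le> x powr (-2*\<alpha>)" using x1 al by (intro powr_mono) auto
  then have "x powr (-2*\<alpha>) + c1 * x powr (-\<epsilon>) \<le> (1 + c1) * x powr (-2*\<alpha>)"
    using c1 by (simp add: algebra_simps)
  moreover have "mm^2 \<le> x powr (2*\<gamma> - 2)"
  proof -
    have "mm^2 \<le> (x powr (\<gamma> - 1))^2" using mm by (intro power_mono) auto
    also have "\<dots> = x powr (2*\<gamma> - 2)" using xp by (simp add: power2_eq_square powr_add[symmetric])
    finally show ?thesis .
  qed
  moreover have "1 + c1 \<le> x powr ?c2"
    using L0c powr_mono2[of ?c2 L0 x] c2 x by simp
  ultimately have "x powr (-2*\<alpha>) + c1 * x powr (-\<epsilon>) \<le> x powr ?c2 * x powr (-2*\<alpha>)"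
    using mult_right_mono[of "1 + c1" "x powr ?c2" "x powr (-2*\<alpha>)"] by simp
  moreover have "0 \<le> x powr (-2*\<alpha>) + c1 * x powr (-\<epsilon>)" using c1 by simp
  ultimately have "mm^2 * (x powr (-2*\<alpha>) + c1 * x powr (-\<epsilon>)) \<le> x powr (2*\<gamma> - 2) * (x powr ?c2 * x powr (-2*\<alpha>))"
    using \<open>mm^2 \<le> x powr (2*\<gamma> - 2)\<close> by (intro mult_mono) auto
  also have "\<dots> = x powr (-\<gamma>*\<alpha>)"
    using xp by (simp add: powr_add[symmetric] algebra_simps)
  also have "\<dots> = (x powr \<gamma>) powr (-\<alpha>)" using xp by (simp add: powr_powr)
  also have "\<dots> \<le> (x * mm) powr (-\<alpha>)"
  proof (rule powr_mono2')
    have "x * mm \<le> x * x powr (\<gamma> - 1)" using mm xp by simp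
    also have "\<dots> = x powr \<gamma>" using xp by (simp add: powr_add[symmetric] powr_mult_base)
    finally show "x * mm \<le> x powr \<gamma>" .
  qed (use al xp mm in auto)
  finally show ?thesis .
qed



theorem lemma3p1:
  fixes xi rho :: "nat pmf" and \<epsilon> \<alpha> \<gamma> c1 :: real and L0 :: nat
  assumes xi_pos: "set_pmf xi \<subseteq> {1..}"
    and xi_aperiodic: "Gcd (set_pmf xi) = 1"
    and eps_pos: "\<epsilon> > 0"
    and xi_moment: "integrable (measure_pmf xi) (\<lambda>n. real n powr (1 + \<epsilon>))"
    and rho_def: "\<And>k. pmf rho k =
        measure_pmf.prob xi {k+1..} / measure_pmf.expectation xi real"
    and c1_pos: "c1 > 0"
    and mixing: "\<And>n m A B. n \<ge> 1 \<Longrightarrow> A \<in> coord_sigma {..m} \<Longrightarrow> B \<in> coord_sigma {m+n..} \<Longrightarrow>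
        measure (env_law xi rho) (A \<inter> B)
          \<le> measure (env_law xi rho) A * measure (env_law xi rho) B + c1 * real n powr (-\<epsilon>)"
    and alpha: "0 < \<alpha>" "\<alpha> \<le> \<epsilon> / 2"
    and gamma: "1 < \<gamma>" "\<gamma> < 1 + \<alpha> / (\<alpha> + 2)"
    and L0_i: "real L0 powr (\<gamma> - 1) \<ge> 3"
    and L0_ii: "real L0 powr (\<epsilon> - \<alpha>) \<ge> measure_pmf.expectation rho (\<lambda>k. real k powr \<epsilon>)"
    and L0_iii: "real L0 powr (2 + 2*\<alpha> - \<gamma>*\<alpha> - 2*\<gamma>) \<ge> c1 + 1"
  shows "\<forall>k. measure (env_law xi rho) {y. bad L0 \<gamma> {n. y n} k 0}
              \<le> real (scale L0 \<gamma> k) powr (-\<alpha>)"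
proof -
  have L0pos: "L0 > 0"
  proof (rule ccontr)
    assume "\<not> L0 > 0" then have "L0 = 0" by simp
    then show False using L0_i by simp
  qed
  then have L0ge1: "real L0 \<ge> 1" by simp
  have c2pos: "2 + 2*\<alpha> - \<gamma>*\<alpha> - 2*\<gamma> > 0"
  proof -
    have "\<gamma> * (\<alpha> + 2) < (1 + \<alpha> / (\<alpha> + 2)) * (\<alpha> + 2)"
      using gamma(2) alpha(1) by (intro mult_strict_right_mono) auto
    also have "\<dots> = \<alpha> + 2 + \<alpha>" using alpha(1) by (simp add: field_simps)
    finally show ?thesis by (simp add: algebra_simps)
  qed
  have mf: "3 \<le> mfac \<gamma> L \<and> real (mfac \<gamma> L) \<le> real L powr (\<gamma> - 1)" if L: "real L \<ge> real L0" for L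
  proof -
    have "real L0 powr (\<gamma> - 1) \<le> real L powr (\<gamma> - 1)" using L gamma(1) by (intro powr_mono2) auto
    then have y3: "real L powr (\<gamma> - 1) \<ge> 3" using L0_i by simp
    then have f3: "\<lfloor>real L powr (\<gamma> - 1)\<rfloor> \<ge> 3" by (simp add: le_floor_iff)
    then have n3: "3 \<le> mfac \<gamma> L" unfolding mfac_def by (metis nat_mono nat_numeral)
    have "real (mfac \<gamma> L) = of_int \<lfloor>real L powr (\<gamma> - 1)\<rfloor>" using f3 by (simp add: mfac_def)
    also have "\<dots> \<le> real L powr (\<gamma> - 1)" by (rule of_int_floor_le)
    finally show ?thesis using n3 by simp
  qed
  have scale_ge: "real (scale L0 \<gamma> k) \<ge> real L0" for k
  proof (induction k)
    case 0 then show ?case by simp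
  next
    case (Suc k)
    have "1 \<le> mfac \<gamma> (scale L0 \<gamma> k)" using mf[OF Suc] by simp
    then have "scale L0 \<gamma> k \<le> scale L0 \<gamma> (Suc k)" by simp
    then have "real (scale L0 \<gamma> k) \<le> real (scale L0 \<gamma> (Suc k))" by (simp only: of_nat_le_iff)
    then show ?case using Suc by linarith
  qed
  interpret EL: prob_space "env_law xi rho"
    unfolding env_law_def
    by (intro prob_space.prob_space_distr env_meas prob_space_pair prob_space_measure_pmf SX_prob)
  have setsEL: "{y. bad L0 \<gamma> {n. y n} k i} \<in> EL.events" for k i
    using bad_sets by (simp add: env_law_def)
  have stat: "measure (env_law xi rho) {y. bad L0 \<gamma> {n. y n} k j} = measure (env_law xi rho) {y. bad L0 \<gamma> {n. y n} k 0}" for k j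
    by (rule bad_stat[OF xi_pos rho_def])
  show ?thesis
  proof
    fix k show "measure (env_law xi rho) {y. bad L0 \<gamma> {n. y n} k 0} \<le> real (scale L0 \<gamma> k) powr (-\<alpha>)"
    proof (induction k)
      case 0
      show ?case using base[OF xi_pos eps_pos xi_moment rho_def L0pos L0_ii] by simp
    next
      case (Suc k)
      define Lk where "Lk = scale L0 \<gamma> k"
      define m where "m = mfac \<gamma> Lk"
      let ?B = "\<lambda>i. {y. bad L0 \<gamma> {n. y n} k i}"
      have Lk1: "real Lk \<ge> 1" using scale_ge[of k] L0ge1 by (simp add: Lk_def)
      have IH: "measure (env_law xi rho) (?B i) \<le> real Lk powr (-\<alpha>)" for i
        using Suc stat[of k i] by (simp add: Lk_def)
      define Pairs where "Pairs = {p \<in> {0..<m} \<times> {0..<m}. fst p + 2 \<le> snd p}"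
      have finP: "finite Pairs" by (simp add: Pairs_def)
      have sub: "{y. bad L0 \<gamma> {n. y n} (Suc k) 0} \<subseteq> (\<Union>p\<in>Pairs. ?B (fst p) \<inter> ?B (snd p))"
      proof
        fix y assume "y \<in> {y. bad L0 \<gamma> {n. y n} (Suc k) 0}"
        then obtain a b where ab: "a \<in> {0..<m}" "b \<in> {0..<m}" "2 \<le> \<bar>int a - int b\<bar>"
            "bad L0 \<gamma> {n. y n} k a" "bad L0 \<gamma> {n. y n} k b"
          by (auto simp: subidx_def m_def Lk_def)
        show "y \<in> (\<Union>p\<in>Pairs. ?B (fst p) \<inter> ?B (snd p))"
        proof (cases "a < b")
          case True
          then have "(a, b) \<in> Pairs" using ab by (auto simp: Pairs_def)
          then show ?thesis using ab by force
        next
          case False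
          then have "(b, a) \<in> Pairs" using ab by (auto simp: Pairs_def)
          then show ?thesis using ab by force
        qed
      qed
      define bnd where "bnd = real Lk powr (-2*\<alpha>) + c1 * real Lk powr (-\<epsilon>)"
      have termb: "measure (env_law xi rho) (?B a \<inter> ?B b) \<le> bnd" if p: "(a, b) \<in> Pairs" for a b
      proof -
        define mm where "mm = (a+1) * Lk - 1"
        define n where "n = b * Lk - mm"
        have ab: "a + 2 \<le> b" using p by (simp add: Pairs_def)
        have "(a+2) * Lk \<le> b * Lk" using ab by (intro mult_right_mono) auto
        moreover have "(a+1) * Lk \<ge> 1" using Lk1 by simp
        ultimately have nge: "n \<ge> Lk + 1" and mn: "mm + n = b * Lk"
          by (auto simp: n_def mm_def algebra_simps)
        have A: "?B a \<in> coord_sigma {..mm}"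
        proof -
          have "block L0 \<gamma> k a \<subseteq> {..mm}" by (auto simp: block_def mm_def Lk_def)
          then show ?thesis using bad_sigma coord_sigma_mono by blast
        qed
        have B: "?B b \<in> coord_sigma {mm+n..}"
        proof -
          have "block L0 \<gamma> k b \<subseteq> {mm+n..}" by (auto simp: block_def mn Lk_def)
          then show ?thesis using bad_sigma coord_sigma_mono by blast
        qed
        have n1: "n \<ge> 1" using nge by simp
        have "measure (env_law xi rho) (?B a \<inter> ?B b)
            \<le> measure (env_law xi rho) (?B a) * measure (env_law xi rho) (?B b) + c1 * real n powr (-\<epsilon>)"
          by (rule mixing[OF n1 A B])
        also have "\<dots> \<le> real Lk powr (-\<alpha>) * real Lk powr (-\<alpha>) + c1 * real Lk powr (-\<epsilon>)"
        proof (intro add_mono mult_mono IH mult_left_mono)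
          show "real n powr (-\<epsilon>) \<le> real Lk powr (-\<epsilon>)"
            using nge Lk1 eps_pos by (intro powr_mono2') auto
        qed (use c1_pos in auto)
        also have "real Lk powr (-\<alpha>) * real Lk powr (-\<alpha>) = real Lk powr (-2*\<alpha>)"
          using Lk1 by (simp add: powr_add[symmetric])
        finally show ?thesis by (simp add: bnd_def)
      qed
      have bnd0: "bnd \<ge> 0" using c1_pos by (simp add: bnd_def)
      have "measure (env_law xi rho) {y. bad L0 \<gamma> {n. y n} (Suc k) 0}
          \<le> measure (env_law xi rho) (\<Union>p\<in>Pairs. ?B (fst p) \<inter> ?B (snd p))"
        using sub finP setsEL by (intro EL.finite_measure_mono) auto
      also have "\<dots> \<le> (\<Sum>p\<in>Pairs. measure (env_law xi rho) (?B (fst p) \<inter> ?B (snd p)))"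
        using finP setsEL by (intro EL.finite_measure_subadditive_finite) auto
      also have "\<dots> \<le> real (card Pairs) * bnd"
        using sum_bounded_above[of Pairs "\<lambda>p. measure (env_law xi rho) (?B (fst p) \<inter> ?B (snd p))" bnd] termb
        by force
      also have "\<dots> \<le> (real m)^2 * bnd"
      proof (intro mult_right_mono bnd0)
        have "card Pairs \<le> card ({0..<m} \<times> {0..<m})" by (intro card_mono) (auto simp: Pairs_def)
        then have "card Pairs \<le> m * m" by (simp add: card_cartesian_product)
        then show "real (card Pairs) \<le> (real m)^2" by (simp add: power2_eq_square flip: of_nat_mult)
      qed
      also have "\<dots> \<le> (real Lk * real m) powr (-\<alpha>)"
        unfolding bnd_def
      proof (rule arith_step[OF _ L0ge1 _ _ c1_pos alpha c2pos L0_iii])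
        show "real Lk \<ge> real L0" using scale_ge[of k] by (simp add: Lk_def)
        show "1 \<le> real m" "real m \<le> real Lk powr (\<gamma> - 1)"
          using mf[of Lk] scale_ge[of k] by (auto simp: m_def Lk_def)
      qed
      also have "\<dots> = real (scale L0 \<gamma> (Suc k)) powr (-\<alpha>)"
        by (simp add: Lk_def m_def)
      finally show ?case .
    qed
  qed
qed

end
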